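(* Let $\Omega\subset\mathbb H^n$ be an open, horizontally bounded and (Euclidean) convex set. If $u:\overline\Omega\to\mathbb R$ is an $H$-convex function with $u=0$ on $\partial\Omega$, and $B_H(\xi_0,3R)\subset\Omega$ for some $\xi_0\in\Omega$ and $R>0$, then $$\frac1{31}\,u(\xi)\ge u(\zeta)\ge 31\,u(\xi)\qquad\forall\xi,\zeta\in B_H(\xi_0,R).$$
   Context: $\mathbb H^n=\mathbb C^n\times\mathbb R\cong\mathbb R^{2n+1}$ with real coordinates $(x,y,t)$, $z=x+iy$, group law $(z,t)\circ(z',t')=(z+z',t+t'+2\,\mathrm{Im}\langle z,z'\rangle)$, $\langle z,z'\rangle=\sum_j z_j\overline{z'_j}$. Dilations $\delta_\lambda(z,t)=(\lambda z,\lambda^2t)$. Horizontal plane at $\xi_0=(x_0,y_0,t_0)$: $H_{\xi_0}=\{(x,y,t):t=t_0+2(x\cdot y_0-x_0\cdot y)\}$. Gauge $N(z,t)=(|z|^4+t^2)^{1/4}$, $d_H(\xi,\zeta)=N(\zeta^{-1}\circ\xi)$, $B_H(\xi,r)=\{\zeta:d_H(\zeta,\xi)<r\}$, $\mathrm{diam}_H$ the $d_H$-diameter; $\Omega$ is horizontally bounded if $\sup\{\mathrm{diam}_H(\Omega\cap H_\xi):\xi\in\Omega\}<\infty$. A function $u$ on an $H$-convex set $\tilde\Omega$ is $H$-convex if $u(\xi_1\circ\delta_\lambda(\xi_1^{-1}\circ\xi_2))\le(1-\lambda)u(\xi_1)+\lambda u(\xi_2)$ for all $\xi_1,\xi_2\in\tilde\Omega$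 with $\xi_1\in H_{\xi_2}$, $\lambda\in[0,1]$. *)

theory Defs
  imports "HOL-Analysis.Analysis"
begin

text \<open>Points of the Heisenberg group H^n = C^n x R, written in real coordinates (x, y, t)
  with z = x + i y; the dimension n is CARD('n).\<close>

type_synonym 'n heis = "(real^'n) \<times> (real^'n) \<times> real"

text \<open>Group law (z,t)o(z',t') = (z+z', t+t'+2 Im<z,z'>), Im<z,z'> = y.x' - x.y'.\<close>
definition hmult :: "'n::finite heis \<Rightarrow> 'n heis \<Rightarrow> 'n heis" (infixl "\<circ>\<^sub>H" 70) where
  "hmult p q = (case p of (x, y, t) \<Rightarrow> case q of (x', y', t') \<Rightarrow>
     (x + x', y + y', t + t' + 2 * (y \<bullet> x' - x \<bullet> y')))"

definition hinv :: "'n::finite heis \<Rightarrow> 'n heis" where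
  "hinv p = (case p of (x, y, t) \<Rightarrow> (-x, -y, -t))"

definition hdil :: "real \<Rightarrow> 'n::finite heis \<Rightarrow> 'n heis" where
  "hdil l p = (case p of (x, y, t) \<Rightarrow> (l *\<^sub>R x, l *\<^sub>R y, l^2 * t))"

definition hplane :: "'n::finite heis \<Rightarrow> 'n heis set" where
  "hplane p0 = (case p0 of (x0, y0, t0) \<Rightarrow>
     {(x, y, t). t = t0 + 2 * (x \<bullet> y0 - x0 \<bullet> y)})"

definition gauge :: "'n::finite heis \<Rightarrow> real" where
  "gauge p = (case p of (x, y, t) \<Rightarrow>
     root 4 ((norm x ^ 2 + norm y ^ 2) ^ 2 + t ^ 2))"

definition dH :: "'n::finite heis \<Rightarrow> 'n heis \<Rightarrow> real" where
  "dH p q = gauge (hmult (hinv q) p)"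

definition ballH :: "'n::finite heis \<Rightarrow> real \<Rightarrow> 'n heis set" where
  "ballH p r = {q. dH q p < r}"

definition horizontally_bounded :: "'n::finite heis set \<Rightarrow> bool" where
  "horizontally_bounded S \<longleftrightarrow>
     (\<exists>C. \<forall>p\<in>S. \<forall>a\<in>S \<inter> hplane p. \<forall>b\<in>S \<inter> hplane p. dH a b \<le> C)"

definition H_convex_on :: "'n::finite heis set \<Rightarrow> ('n heis \<Rightarrow> real) \<Rightarrow> bool" where
  "H_convex_on S u \<longleftrightarrow>
     (\<forall>p1\<in>S. \<forall>p2\<in>S. \<forall>l::real. p1 \<in> hplane p2 \<and> 0 \<le> l \<and> l \<le> 1 \<longrightarrow>
        u (hmult p1 (hdil l (hmult (hinv p1) p2))) \<le> (1 - l) * u p1 + l * u p2)"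

end

theory Submission
  imports Defs
begin


lemma hmult_eq: "hmult (x,y,t) (x',y',t') = (x+x', y+y', t+t'+2*(y \<bullet> x' - x \<bullet> y'))"
  by (simp add: hmult_def)
lemma hinv_eq: "hinv (x,y,t) = (-x,-y,-t)" by (simp add: hinv_def)
lemma hdil_eq: "hdil l (x,y,t) = (l *\<^sub>R x, l *\<^sub>R y, l^2 * t)" by (simp add: hdil_def)
lemma gauge_eq: "gauge (x,y,t) = root 4 ((norm x ^ 2 + norm y ^ 2) ^ 2 + t ^ 2)" by (simp add: gauge_def)
lemma hplane_iff: "(x,y,t) \<in> hplane (x0,y0,t0) \<longleftrightarrow> t = t0 + 2 * (x \<bullet> y0 - x0 \<bullet> y)"
  by (simp add: hplane_def)

lemma hmult_assoc: "hmult (hmult p q) r = hmult p (hmult q r)"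
  by (cases p; cases q; cases r) (simp add: hmult_eq inner_add_left inner_add_right algebra_simps)
lemma hmult_inv_left: "hmult (hinv p) (hmult p q) = q"
  by (cases p; cases q) (simp add: hmult_eq hinv_eq inner_add_left inner_add_right algebra_simps inner_commute)
lemma hmult_inv_right: "hmult p (hmult (hinv p) q) = q"
  by (cases p; cases q) (simp add: hmult_eq hinv_eq inner_add_left inner_add_right algebra_simps inner_commute)
lemma hmult_zero: "hmult p (0,0,0) = p"
  by (cases p) (simp add: hmult_eq)



lemma two_inner_le: "2 * \<bar>x \<bullet> a\<bar> \<le> norm x ^ 2 + norm (a::'a::real_inner) ^ 2"
proof -
  have "\<bar>x \<bullet> a\<bar> \<le> norm x * norm a" by (rule Cauchy_Schwarz_ineq2)
  moreover have "2 * (norm x * norm a) \<le> norm x ^ 2 + norm a ^ 2"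
    using sum_squares_bound[of "norm x" "norm a"] by (simp add: power2_eq_square)
  ultimately show ?thesis by linarith
qed

lemma norm_add_sq_le: "norm (x + a) ^ 2 \<le> 2 * (norm x ^ 2 + norm (a::'a::real_inner) ^ 2)"
proof -
  have "norm (x+a) ^ 2 = norm x ^ 2 + 2 * (x \<bullet> a) + norm a ^ 2"
    by (simp add: power2_norm_eq_inner inner_add_left inner_add_right inner_commute)
  moreover have "2 * (x \<bullet> a) \<le> norm x ^ 2 + norm a ^ 2" using two_inner_le[of x a] by linarith
  ultimately show ?thesis by (simp add: algebra_simps)
qed

lemma beyond:
  fixes x y a b :: "real^'n::finite"
  assumes "norm x ^ 2 + norm y ^ 2 + norm a ^ 2 + norm b ^ 2 \<le> 3 * R^2" "\<bar>t\<bar> \<le> R^2" "R > 0"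
  shows "gauge (hmult (x,y,t) (a,b,0)) < 3 * R"
proof -
  define S where "S = norm (x+a) ^ 2 + norm (y+b) ^ 2"
  define T where "T = t + 2 * (y \<bullet> a - x \<bullet> b)"
  have S0: "0 \<le> S" "S \<le> 6 * R^2" unfolding S_def using norm_add_sq_le[of x a] norm_add_sq_le[of y b] assms(1) by auto
  have T0: "\<bar>T\<bar> \<le> 4 * R^2" unfolding T_def using two_inner_le[of y a] two_inner_le[of x b] assms(1,2) by (simp add: abs_le_iff) (smt (verit) abs_le_D1 abs_le_D2)
  have "S^2 \<le> (6*R^2)^2" using S0 by (intro power_mono) auto
  moreover have "T^2 \<le> (4*R^2)^2"
  proof -
    have "\<bar>T\<bar>^2 \<le> (4*R^2)^2" using T0 by (intro power_mono) auto
    thus ?thesis by simp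
  qed
  moreover have "(6*R^2)^2 + (4*R^2)^2 < (3*R)^4" using assms(3) by (simp add: power_mult_distrib)
  ultimately have "S^2 + T^2 < (3*R)^4" by linarith
  hence "root 4 (S^2 + T^2) < root 4 ((3*R)^4)" by simp
  also have "\<dots> = 3 * R" using assms(3) by (intro real_root_power_cancel) auto
  finally show ?thesis by (simp add: hmult_eq gauge_eq S_def T_def)
qed



lemma line_pt: "hmult (x,y,t) (s *\<^sub>R a, s *\<^sub>R b, 0) =
   (x + s *\<^sub>R a, y + s *\<^sub>R b, t + 2 * s * (y \<bullet> a - x \<bullet> b))"
  by (simp add: hmult_eq algebra_simps)

lemma line_conv:
  fixes p :: "'n::finite heis"
  assumes hc: "H_convex_on S u" and al: "\<alpha> < 0" and be: "0 < \<beta>"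
    and A: "hmult p (\<alpha> *\<^sub>R a, \<alpha> *\<^sub>R b, 0) \<in> S" and B: "hmult p (\<beta> *\<^sub>R a, \<beta> *\<^sub>R b, 0) \<in> S"
  shows "u p \<le> \<beta>/(\<beta>-\<alpha>) * u (hmult p (\<alpha> *\<^sub>R a, \<alpha> *\<^sub>R b, 0))
            + (-\<alpha>)/(\<beta>-\<alpha>) * u (hmult p (\<beta> *\<^sub>R a, \<beta> *\<^sub>R b, 0))"
proof -
  obtain x y t where p: "p = (x,y,t)" by (cases p) auto
  define A' where "A' = hmult p (\<alpha> *\<^sub>R a, \<alpha> *\<^sub>R b, 0)"
  define B' where "B' = hmult p (\<beta> *\<^sub>R a, \<beta> *\<^sub>R b, 0)"
  define l where "l = -\<alpha>/(\<beta>-\<alpha>)"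
  have l01: "0 \<le> l" "l \<le> 1" using al be by (auto simp: l_def field_simps)
  have hp: "A' \<in> hplane B'"
    by (simp add: A'_def B'_def p line_pt hplane_iff inner_add_left inner_add_right algebra_simps inner_commute)
  have d: "hmult (hinv A') B' = ((\<beta>-\<alpha>) *\<^sub>R a, (\<beta>-\<alpha>) *\<^sub>R b, 0)"
    by (simp add: A'_def B'_def p line_pt hinv_eq hmult_eq inner_add_left inner_add_right algebra_simps inner_commute)
  have lb: "l * (\<beta>-\<alpha>) = -\<alpha>" using al be by (simp add: l_def field_simps)
  have "hdil l (hmult (hinv A') B') = ((-\<alpha>) *\<^sub>R a, (-\<alpha>) *\<^sub>R b, 0)"
    by (simp add: d hdil_eq lb)
  hence pt: "hmult A' (hdil l (hmult (hinv A') B')) = p"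
    by (simp add: A'_def p line_pt hmult_eq inner_add_left inner_add_right algebra_simps inner_commute)
  have key: "\<And>p1 p2 l. p1 \<in> S \<Longrightarrow> p2 \<in> S \<Longrightarrow> p1 \<in> hplane p2 \<Longrightarrow> 0 \<le> l \<Longrightarrow> l \<le> 1 \<Longrightarrow>
     u (hmult p1 (hdil l (hmult (hinv p1) p2))) \<le> (1 - l) * u p1 + l * u p2"
    using hc unfolding H_convex_on_def by blast
  have "A' \<in> S" "B' \<in> S" using A B by (simp_all add: A'_def B'_def)
  from key[OF this hp l01] have ineq: "u p \<le> (1 - l) * u A' + l * u B'" by (simp only: pt)
  have eq: "1 - l = \<beta>/(\<beta>-\<alpha>)" using al be by (simp add: l_def field_simps)
  show ?thesis using ineq unfolding A'_def[symmetric] B'_def[symmetric] l_def[symmetric] eq[symmetric] .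
qed



lemma ray_frontier:
  fixes \<Omega> :: "'n::finite heis set"
  assumes op: "open \<Omega>" and hb: "horizontally_bounded \<Omega>" and p: "p \<in> \<Omega>"
    and nz: "(a,b) \<noteq> (0,0)" and rho: "\<rho> \<ge> 0"
    and ins: "\<forall>s\<in>{0..\<rho>}. hmult p (s *\<^sub>R a, s *\<^sub>R b, 0) \<in> \<Omega>"
  shows "\<exists>\<sigma>>\<rho>. hmult p (\<sigma> *\<^sub>R a, \<sigma> *\<^sub>R b, 0) \<in> frontier \<Omega>"
proof -
  obtain C where C: "\<forall>p\<in>\<Omega>. \<forall>a'\<in>\<Omega> \<inter> hplane p. \<forall>b'\<in>\<Omega> \<inter> hplane p. dH a' b' \<le> C"
    using hb unfolding horizontally_bounded_def by blast
  obtain x y t where pe: "p = (x,y,t)" by (cases p) auto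
  define L where "L s = hmult p (s *\<^sub>R a, s *\<^sub>R b, 0)" for s
  define nh where "nh = sqrt (norm a ^ 2 + norm b ^ 2)"
  have "a \<noteq> 0 \<or> b \<noteq> 0" using nz by auto
  hence "0 < norm a ^ 2 + norm b ^ 2" by (auto intro: add_pos_nonneg add_nonneg_pos)
  hence nh0: "nh > 0" by (simp add: nh_def)
  have dist: "dH (L s) p = \<bar>s\<bar> * nh" for s
  proof -
    have "hmult (hinv p) (L s) = (s *\<^sub>R a, s *\<^sub>R b, 0)"
      by (simp add: L_def pe line_pt hinv_eq hmult_eq algebra_simps inner_commute)
    hence "dH (L s) p = root 4 ((norm (s *\<^sub>R a) ^ 2 + norm (s *\<^sub>R b) ^ 2) ^ 2)"
      by (simp add: dH_def gauge_eq)
    also have "(norm (s *\<^sub>R a) ^ 2 + norm (s *\<^sub>R b) ^ 2) ^ 2 = (\<bar>s\<bar> * nh) ^ 4"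
    proof -
      have "(\<bar>s\<bar> * nh) ^ 4 = ((\<bar>s\<bar> * nh)^2)^2" by simp
      also have "(\<bar>s\<bar> * nh)^2 = s^2 * (norm a ^ 2 + norm b ^ 2)"
        by (simp add: nh_def power_mult_distrib)
      finally show ?thesis by (simp add: power_mult_distrib algebra_simps)
    qed
    also have "root 4 ((\<bar>s\<bar> * nh) ^ 4) = \<bar>s\<bar> * nh" using nh0 by (intro real_root_power_cancel) auto
    finally show ?thesis .
  qed
  have hp: "L s \<in> hplane p" for s
    by (simp add: L_def pe line_pt hplane_iff inner_add_left inner_add_right algebra_simps inner_commute)
  have pp: "p \<in> hplane p" by (simp add: pe hplane_iff)
  define M where "M = max (\<rho>+1) ((\<bar>C\<bar>+1)/nh)"
  have M0: "M \<ge> 0" "M > \<rho>" using rho by (auto simp: M_def)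
  have "L M \<notin> \<Omega>"
  proof
    assume "L M \<in> \<Omega>"
    hence "dH (L M) p \<le> C" using C p hp pp by blast
    moreover have "M * nh \<ge> \<bar>C\<bar> + 1"
    proof -
      have "M \<ge> (\<bar>C\<bar>+1)/nh" by (simp add: M_def)
      hence "M * nh \<ge> (\<bar>C\<bar>+1)/nh * nh" using nh0 by (intro mult_right_mono) auto
      thus ?thesis using nh0 by simp
    qed
    ultimately show False using dist[of M] M0 by simp
  qed
  moreover have "L 0 \<in> \<Omega>" using p by (simp add: L_def hmult_zero)
  moreover have "connected (L ` {0..M})"
  proof (rule connected_continuous_image)
    show "continuous_on {0..M} L" unfolding L_def pe line_pt by (intro continuous_intros)
  qed simp
  ultimately have "L ` {0..M} \<inter> frontier \<Omega> \<noteq> {}"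
  proof (intro connected_Int_frontier)
    assume "L M \<notin> \<Omega>" "L 0 \<in> \<Omega>" "connected (L ` {0..M})"
    show "connected (L ` {0..M})" by fact
    have "0 \<in> {0..M}" "M \<in> {0..M}" using M0 by auto
    thus "L ` {0..M} \<inter> \<Omega> \<noteq> {}" "L ` {0..M} - \<Omega> \<noteq> {}" using \<open>L M \<notin> \<Omega>\<close> \<open>L 0 \<in> \<Omega>\<close> by blast+
  qed
  then obtain \<sigma> where s: "\<sigma> \<in> {0..M}" "L \<sigma> \<in> frontier \<Omega>" by blast
  have "L \<sigma> \<notin> \<Omega>" using s(2) op by (simp add: frontier_def interior_open)
  hence "\<sigma> > \<rho>" using ins s(1) unfolding L_def by force
  thus ?thesis using s(2) unfolding L_def by blast
qed



lemma fr_cl: "frontier S \<subseteq> closure S" by (auto simp: frontier_def)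

lemma nonpos:
  fixes \<Omega> :: "'n::finite heis set"
  assumes op: "open \<Omega>" and hb: "horizontally_bounded \<Omega>" and hc: "H_convex_on (closure \<Omega>) u"
    and fr: "\<forall>p\<in>frontier \<Omega>. u p = 0" and p: "p \<in> \<Omega>"
  shows "u p \<le> 0"
proof -
  define e :: "real^'n" where "e = axis undefined 1"
  have e0: "e \<noteq> 0" unfolding e_def by (metis norm_axis_1 norm_zero zero_neq_one)
  have ins: "\<forall>s\<in>{0..0::real}. hmult p (s *\<^sub>R a, s *\<^sub>R b, 0) \<in> \<Omega>" for a b
    using p by (simp add: hmult_zero)
  obtain \<sigma>1 where s1: "\<sigma>1 > 0" "hmult p (\<sigma>1 *\<^sub>R e, \<sigma>1 *\<^sub>R 0, 0) \<in> frontier \<Omega>"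
    using ray_frontier[OF op hb p _ _ ins, of e 0] e0 by auto
  obtain \<sigma>2 where s2: "\<sigma>2 > 0" "hmult p (\<sigma>2 *\<^sub>R (-e), \<sigma>2 *\<^sub>R 0, 0) \<in> frontier \<Omega>"
    using ray_frontier[OF op hb p _ _ ins, of "-e" 0] e0 by auto
  have s2': "hmult p ((-\<sigma>2) *\<^sub>R e, (-\<sigma>2) *\<^sub>R 0, 0) \<in> frontier \<Omega>" using s2(2) by simp
  have "u p \<le> \<sigma>1/(\<sigma>1-(-\<sigma>2)) * u (hmult p ((-\<sigma>2) *\<^sub>R e, (-\<sigma>2) *\<^sub>R 0, 0))
            + (-(-\<sigma>2))/(\<sigma>1-(-\<sigma>2)) * u (hmult p (\<sigma>1 *\<^sub>R e, \<sigma>1 *\<^sub>R 0, 0))"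
    using s1 s2 s2' fr_cl by (intro line_conv[OF hc]) auto
  also have "\<dots> = 0" using fr s1(2) s2' by simp
  finally show ?thesis .
qed

lemma step:
  fixes \<Omega> :: "'n::finite heis set"
  assumes op: "open \<Omega>" and hb: "horizontally_bounded \<Omega>" and hc: "H_convex_on (closure \<Omega>) u"
    and fr: "\<forall>p\<in>frontier \<Omega>. u p = 0" and pv: "prev \<in> \<Omega>" and rho: "\<rho> > 0"
    and nx: "nxt = hmult prev (a,b,0)"
    and ins: "\<forall>s\<in>{0..\<rho>}. hmult nxt (s *\<^sub>R a, s *\<^sub>R b, 0) \<in> \<Omega>"
  shows "u nxt \<le> \<rho>/(1+\<rho>) * u prev"
proof -
  have up: "u prev \<le> 0" by (rule nonpos[OF op hb hc fr pv])
  have nin: "nxt \<in> \<Omega>" using ins rho by (metis atLeastAtMost_iff hmult_zero less_eq_real_def order_refl scale_zero_left)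
  show ?thesis
  proof (cases "(a,b) = (0,0)")
    case True
    hence "nxt = prev" using nx by (simp add: hmult_zero)
    moreover have "u prev \<le> \<rho>/(1+\<rho>) * u prev"
    proof -
      have "\<rho>/(1+\<rho>) * u prev - u prev = - u prev / (1+\<rho>)" using rho by (simp add: field_simps)
      also have "\<dots> \<ge> 0" using up rho by (simp add: divide_nonpos_pos)
      finally show ?thesis by simp
    qed
    ultimately show ?thesis by simp
  next
    case False
    obtain \<sigma> where s: "\<sigma> > \<rho>" "hmult nxt (\<sigma> *\<^sub>R a, \<sigma> *\<^sub>R b, 0) \<in> frontier \<Omega>"
      using ray_frontier[OF op hb nin False _ ins] rho by auto
    have pe: "hmult nxt ((-1) *\<^sub>R a, (-1) *\<^sub>R b, 0) = prev"
      by (simp add: nx hmult_assoc) (cases prev, simp add: hmult_eq inner_commute)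
    have "u nxt \<le> \<sigma>/(\<sigma>-(-1)) * u (hmult nxt ((-1) *\<^sub>R a, (-1) *\<^sub>R b, 0))
            + (-(-1))/(\<sigma>-(-1)) * u (hmult nxt (\<sigma> *\<^sub>R a, \<sigma> *\<^sub>R b, 0))"
      using s rho pe pv fr_cl closure_subset by (intro line_conv[OF hc]) auto
    also have "\<dots> = \<sigma>/(1+\<sigma>) * u prev" using pe fr s(2) by (simp add: add.commute)
    also have "\<dots> \<le> \<rho>/(1+\<rho>) * u prev"
    proof (rule mult_right_mono_neg[OF _ up])
      show "\<rho>/(1+\<rho>) \<le> \<sigma>/(1+\<sigma>)" using s(1) rho by (simp add: field_simps)
    qed
    finally show ?thesis .
  qed
qed



lemma inball:
  fixes \<xi>0 :: "'n::finite heis"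
  assumes "ballH \<xi>0 (3*R) \<subseteq> \<Omega>" "R>0"
    "norm x^2 + norm y^2 + norm a^2 + norm b^2 \<le> 3*R^2" "\<bar>t\<bar> \<le> R^2"
  shows "hmult (hmult \<xi>0 (x,y,t)) (a,b,0) \<in> \<Omega>"
proof -
  have "dH (hmult (hmult \<xi>0 (x,y,t)) (a,b,0)) \<xi>0 < 3*R"
    unfolding dH_def hmult_assoc hmult_inv_left using beyond[OF assms(3,4,2)] .
  thus ?thesis using assms(1) by (auto simp: ballH_def)
qed

lemma gauge_bounds:
  assumes "gauge (x,y,t) < R" "R > 0"
  shows "norm x^2 + norm y^2 \<le> R^2" "\<bar>t\<bar> \<le> R^2"
proof -
  define S where "S = norm x^2 + norm y^2"
  have "root 4 (S^2 + t^2) < root 4 (R^4)"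
    using assms real_root_power_cancel[of 4 R] by (simp add: gauge_eq S_def)
  hence X: "S^2 + t^2 < (R^2)^2" by (simp add: power_mult_distrib[symmetric] power_mult[symmetric])
  have "S^2 < (R^2)^2" using X zero_le_power2[of t] by linarith
  hence "S < R^2" by (rule power_less_imp_less_base) simp
  thus "norm x^2 + norm y^2 \<le> R^2" by (simp add: S_def)
  have "\<bar>t\<bar>^2 < (R^2)^2" using X zero_le_power2[of S] power2_abs[of t] by linarith
  hence "\<bar>t\<bar> < R^2" by (rule power_less_imp_less_base) simp
  thus "\<bar>t\<bar> \<le> R^2" by simp
qed

lemma cstep:
  fixes \<Omega> :: "'n::finite heis set"
  assumes op: "open \<Omega>" and hb: "horizontally_bounded \<Omega>" and hc: "H_convex_on (closure \<Omega>) u"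
    and fr: "\<forall>p\<in>frontier \<Omega>. u p = 0" and b3: "ballH \<xi>0 (3*R) \<subseteq> \<Omega>" and R: "R > 0"
    and pv: "hmult \<xi>0 W \<in> \<Omega>" and rho: "\<rho> > 0"
    and wq: "hmult W (a,b,0) = (x,y,t)" and tb: "\<bar>t\<bar> \<le> R^2"
    and nb: "\<forall>s\<in>{0..\<rho>}. norm x^2 + norm y^2 + s^2 * (norm a^2 + norm b^2) \<le> 3*R^2"
  shows "u (hmult \<xi>0 (x,y,t)) \<le> \<rho>/(1+\<rho>) * u (hmult \<xi>0 W)" "hmult \<xi>0 (x,y,t) \<in> \<Omega>"
proof -
  have nx: "hmult \<xi>0 (x,y,t) = hmult (hmult \<xi>0 W) (a,b,0)" by (simp add: hmult_assoc wq)
  have ins: "\<forall>s\<in>{0..\<rho>}. hmult (hmult \<xi>0 (x,y,t)) (s *\<^sub>R a, s *\<^sub>R b, 0) \<in> \<Omega>"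
  proof
    fix s assume s: "s \<in> {0..\<rho>}"
    have "norm x^2 + norm y^2 + norm (s *\<^sub>R a)^2 + norm (s *\<^sub>R b)^2 \<le> 3*R^2"
      using nb s by (simp add: power_mult_distrib algebra_simps)
    thus "hmult (hmult \<xi>0 (x,y,t)) (s *\<^sub>R a, s *\<^sub>R b, 0) \<in> \<Omega>" by (rule inball[OF b3 R _ tb])
  qed
  show "u (hmult \<xi>0 (x,y,t)) \<le> \<rho>/(1+\<rho>) * u (hmult \<xi>0 W)"
    by (rule step[OF op hb hc fr pv rho nx ins])
  show "hmult \<xi>0 (x,y,t) \<in> \<Omega>" using ins rho by (metis atLeastAtMost_iff hmult_zero less_eq_real_def order_refl scale_zero_left)
qed



lemma sq_le: "0 \<le> s \<Longrightarrow> s \<le> r \<Longrightarrow> 0 \<le> (X::real) \<Longrightarrow> s^2 * X \<le> r^2 * X"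
  by (intro mult_right_mono power_mono) auto

lemma sq_le1: "0 \<le> s \<Longrightarrow> s \<le> 1 \<Longrightarrow> 0 \<le> (X::real) \<Longrightarrow> s^2 * X \<le> X"
  using sq_le[of s 1 X] by simp

lemma harn:
  fixes \<Omega> :: "'n::finite heis set"
  assumes op: "open \<Omega>" and hb: "horizontally_bounded \<Omega>" and hc: "H_convex_on (closure \<Omega>) u"
    and fr: "\<forall>p\<in>frontier \<Omega>. u p = 0" and b3: "ballH \<xi>0 (3*R) \<subseteq> \<Omega>" and R: "R > 0"
    and xi: "\<xi> \<in> ballH \<xi>0 R" and ze: "\<zeta> \<in> ballH \<xi>0 R"
  shows "u \<zeta> \<le> u \<xi> / 31"
proof -
  obtain x1 y1 t1 where w1: "hmult (hinv \<xi>0) \<xi> = (x1,y1,t1)" by (cases "hmult (hinv \<xi>0) \<xi>") auto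
  obtain x2 y2 t2 where w2: "hmult (hinv \<xi>0) \<zeta> = (x2,y2,t2)" by (cases "hmult (hinv \<xi>0) \<zeta>") auto
  have "gauge (x1,y1,t1) < R" using xi w1 by (simp add: ballH_def dH_def)
  note g1 = gauge_bounds[OF this R]
  have "gauge (x2,y2,t2) < R" using ze w2 by (simp add: ballH_def dH_def)
  note g2 = gauge_bounds[OF this R]
  have P0: "hmult \<xi>0 (x1,y1,t1) = \<xi>" using hmult_inv_right[of \<xi>0 \<xi>] w1 by simp
  have P5: "hmult \<xi>0 (x2,y2,t2) = \<zeta>" using hmult_inv_right[of \<xi>0 \<zeta>] w2 by simp
  have xiO: "\<xi> \<in> \<Omega>" using xi R b3 by (auto simp: ballH_def)
  define e :: "real^'n" where "e = axis undefined 1"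
  have ee: "e \<bullet> e = 1" "norm e = 1" by (simp_all add: e_def inner_axis_axis)
  define \<delta> where "\<delta> = t2 - t1"
  define c where "c = sqrt (\<bar>\<delta>\<bar>/2)"
  define \<mu> where "\<mu> = - \<delta> / (2*c)"
  have c0: "c \<ge> 0" by (simp add: c_def)
  have c2: "c^2 = \<bar>\<delta>\<bar>/2" by (simp add: c_def)
  have cR: "c^2 \<le> R^2" using c2 g1(2) g2(2) abs_triangle_ineq4[of t2 t1] unfolding \<delta>_def by argo
  have cmu: "t1 - 2*(c*\<mu>) = t2"
  proof (cases "c = 0")
    case True thus ?thesis using c2 by (simp add: \<delta>_def)
  next
    case False thus ?thesis by (simp add: \<mu>_def \<delta>_def field_simps)
  qed
  have mu2: "\<mu>^2 = c^2"
  proof (cases "c = 0")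
    case True thus ?thesis by (simp add: \<mu>_def)
  next
    case False
    have "\<mu>^2 = \<delta>^2 / (4 * c^2)" by (simp add: \<mu>_def power_divide power_mult_distrib)
    also have "\<delta>^2 = (2*c^2)^2"
    proof -
      have "\<bar>\<delta>\<bar> = 2*c^2" using c2 by simp
      hence "\<bar>\<delta>\<bar>^2 = (2*c^2)^2" by simp
      thus ?thesis by simp
    qed
    also have "(2*c^2)^2 / (4 * c^2) = c^2" using False by (simp add: power2_eq_square)
    finally show ?thesis .
  qed
  have nce: "norm (c *\<^sub>R e)^2 = c^2" "norm (\<mu> *\<^sub>R e)^2 = c^2" using ee mu2 by (simp_all add: power_mult_distrib)
  have wq1: "hmult (x1,y1,t1) (-x1,-y1,0) = (0,0,t1)" by (simp add: hmult_eq inner_commute)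
  have nb1: "\<forall>s\<in>{0..3/2}. norm (0::real^'n)^2 + norm (0::real^'n)^2 + s^2 * (norm (-x1)^2 + norm (-y1)^2) \<le> 3*R^2"
  proof
    fix s :: real assume "s \<in> {0..3/2}"
    hence "s^2 * (norm x1^2 + norm y1^2) \<le> (3/2)^2 * (norm x1^2 + norm y1^2)" by (intro sq_le) auto
    moreover have "(3/2::real)^2 * (norm x1^2 + norm y1^2) = 9/4 * (norm x1^2 + norm y1^2)" by (simp add: power2_eq_square)
    ultimately have "s^2 * (norm x1^2 + norm y1^2) \<le> 3*R^2" using g1(1) zero_le_power2[of R] by argo
    thus "norm (0::real^'n)^2 + norm (0::real^'n)^2 + s^2 * (norm (-x1)^2 + norm (-y1)^2) \<le> 3*R^2"
      by simp
  qed
  have s1: "u (hmult \<xi>0 (0,0,t1)) \<le> (3/2)/(1+3/2) * u (hmult \<xi>0 (x1,y1,t1))" "hmult \<xi>0 (0,0,t1) \<in> \<Omega>"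
    using cstep[OF op hb hc fr b3 R _ _ wq1 g1(2) nb1] P0 xiO by auto
  have wq2: "hmult (0,0,t1) (c *\<^sub>R e, 0, 0) = (c *\<^sub>R e, 0, t1)" by (simp add: hmult_eq)
  have nb2: "\<forall>s\<in>{0..1}. norm (c *\<^sub>R e)^2 + norm (0::real^'n)^2 + s^2 * (norm (c *\<^sub>R e)^2 + norm (0::real^'n)^2) \<le> 3*R^2"
  proof
    fix s :: real assume "s \<in> {0..1}"
    hence "s^2 * c^2 \<le> c^2" by (intro sq_le1) auto
    thus "norm (c *\<^sub>R e)^2 + norm (0::real^'n)^2 + s^2 * (norm (c *\<^sub>R e)^2 + norm (0::real^'n)^2) \<le> 3*R^2"
      unfolding nce norm_zero zero_power2 add_0_right add_0_left using cR zero_le_power2[of R] by argo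
  qed
  have s2: "u (hmult \<xi>0 (c *\<^sub>R e, 0, t1)) \<le> 1/(1+1) * u (hmult \<xi>0 (0,0,t1))" "hmult \<xi>0 (c *\<^sub>R e, 0, t1) \<in> \<Omega>"
    using cstep[OF op hb hc fr b3 R s1(2) _ wq2 g1(2) nb2] by auto
  have wq3: "hmult (c *\<^sub>R e, 0, t1) (0, \<mu> *\<^sub>R e, 0) = (c *\<^sub>R e, \<mu> *\<^sub>R e, t2)"
    using cmu ee by (simp add: hmult_eq mult.commute)
  have nb3: "\<forall>s\<in>{0..1}. norm (c *\<^sub>R e)^2 + norm (\<mu> *\<^sub>R e)^2 + s^2 * (norm (0::real^'n)^2 + norm (\<mu> *\<^sub>R e)^2) \<le> 3*R^2"
  proof
    fix s :: real assume "s \<in> {0..1}"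
    hence "s^2 * c^2 \<le> c^2" by (intro sq_le1) auto
    thus "norm (c *\<^sub>R e)^2 + norm (\<mu> *\<^sub>R e)^2 + s^2 * (norm (0::real^'n)^2 + norm (\<mu> *\<^sub>R e)^2) \<le> 3*R^2"
      unfolding nce norm_zero zero_power2 add_0_right add_0_left using cR zero_le_power2[of R] by argo
  qed
  have s3: "u (hmult \<xi>0 (c *\<^sub>R e, \<mu> *\<^sub>R e, t2)) \<le> 1/(1+1) * u (hmult \<xi>0 (c *\<^sub>R e, 0, t1))"
     "hmult \<xi>0 (c *\<^sub>R e, \<mu> *\<^sub>R e, t2) \<in> \<Omega>"
    using cstep[OF op hb hc fr b3 R s2(2) _ wq3 g2(2) nb3] by auto
  have wq4: "hmult (c *\<^sub>R e, \<mu> *\<^sub>R e, t2) (-(c *\<^sub>R e), -(\<mu> *\<^sub>R e), 0) = (0, 0, t2)"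
    by (simp add: hmult_eq)
  have nb4: "\<forall>s\<in>{0..1}. norm (0::real^'n)^2 + norm (0::real^'n)^2 + s^2 * (norm (-(c *\<^sub>R e))^2 + norm (-(\<mu> *\<^sub>R e))^2) \<le> 3*R^2"
  proof
    fix s :: real assume "s \<in> {0..1}"
    hence "s^2 * (c^2 + c^2) \<le> c^2 + c^2" by (intro sq_le1) auto
    thus "norm (0::real^'n)^2 + norm (0::real^'n)^2 + s^2 * (norm (-(c *\<^sub>R e))^2 + norm (-(\<mu> *\<^sub>R e))^2) \<le> 3*R^2"
      unfolding norm_minus_cancel nce norm_zero zero_power2 add_0_right add_0_left using cR zero_le_power2[of R] by argo
  qed
  have s4: "u (hmult \<xi>0 (0, 0, t2)) \<le> 1/(1+1) * u (hmult \<xi>0 (c *\<^sub>R e, \<mu> *\<^sub>R e, t2))"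
     "hmult \<xi>0 (0, 0, t2) \<in> \<Omega>"
    using cstep[OF op hb hc fr b3 R s3(2) _ wq4 g2(2) nb4] by auto
  have wq5: "hmult (0, 0, t2) (x2, y2, 0) = (x2, y2, t2)" by (simp add: hmult_eq)
  have nb5: "\<forall>s\<in>{0..1}. norm x2^2 + norm y2^2 + s^2 * (norm x2^2 + norm y2^2) \<le> 3*R^2"
  proof
    fix s :: real assume "s \<in> {0..1}"
    hence "s^2 * (norm x2^2 + norm y2^2) \<le> norm x2^2 + norm y2^2" by (intro sq_le1) auto
    thus "norm x2^2 + norm y2^2 + s^2 * (norm x2^2 + norm y2^2) \<le> 3*R^2"
      using g2(1) zero_le_power2[of R] by argo
  qed
  have s5: "u (hmult \<xi>0 (x2, y2, t2)) \<le> 1/(1+1) * u (hmult \<xi>0 (0, 0, t2))"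
    using cstep[OF op hb hc fr b3 R s4(2) _ wq5 g2(2) nb5] by auto
  have u0: "u \<xi> \<le> 0" by (rule nonpos[OF op hb hc fr xiO])
  show ?thesis using s1(1) s2(1) s3(1) s4(1) s5 u0 P0 P5 by simp
qed


theorem theorem6p7:
  fixes \<Omega> :: "'n::finite heis set" and u :: "'n heis \<Rightarrow> real"
    and \<xi>0 :: "'n heis" and R :: real
  assumes "open \<Omega>" and "horizontally_bounded \<Omega>" and "convex \<Omega>"
    and "H_convex_on (closure \<Omega>) u"
    and "\<forall>p\<in>frontier \<Omega>. u p = 0"
    and "\<xi>0 \<in> \<Omega>" and "R > 0" and "ballH \<xi>0 (3 * R) \<subseteq> \<Omega>"
  shows "\<forall>\<xi>\<in>ballH \<xi>0 R. \<forall>\<zeta>\<in>ballH \<xi>0 R. u \<xi> / 31 \<ge> u \<zeta> \<and> u \<zeta> \<ge> 31 * u \<xi>"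
proof (intro ballI conjI)
  fix \<xi> \<zeta> assume a: "\<xi> \<in> ballH \<xi>0 R" "\<zeta> \<in> ballH \<xi>0 R"
  show "u \<xi> / 31 \<ge> u \<zeta>" by (rule harn[OF assms(1,2,4,5,8,7) a(1,2)])
  have "u \<xi> \<le> u \<zeta> / 31" by (rule harn[OF assms(1,2,4,5,8,7) a(2,1)])
  thus "u \<zeta> \<ge> 31 * u \<xi>" by simp
qed

end
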